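(* Let $\mathrm{Cir}_9$ be the graph with vertex set $\{1,\dots,9\}$ whose maximal stable sets are exactly $\{1,2,3\},\{4,5,6\},\{7,8,9\},\{1,4,7\},\{3,6,9\}$ (so two distinct vertices are non-adjacent iff they lie together in one of these sets). Then $\mathrm{Cir}_9$ is not co-weakly triangle, i.e., the complement of $\mathrm{Cir}_9$ is not weakly triangle.
   Context: A family $\mathcal S$ of maximal stable sets of $G$ is non-edge covering if every two distinct non-adjacent vertices lie in a common member. A graph $G$ is weakly triangle if there is a non-edge covering family $\mathcal S$ of maximal stable sets of $G$ such that for every $S\in\mathcal S$ and every pair of adjacent vertices $u,v\in V(G)\setminus S$, $u$ and $v$ have a common neighbor in $S$. *)

theory Defs
  imports Main
begin

text \<open>A finite simple graph is given by a vertex set V and a symmetric,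
irreflexive adjacency relation E (only its restriction to V matters).\<close>

definition stable_set :: "'a set \<Rightarrow> ('a \<Rightarrow> 'a \<Rightarrow> bool) \<Rightarrow> 'a set \<Rightarrow> bool" where
  "stable_set V E S \<longleftrightarrow> S \<subseteq> V \<and> (\<forall>u\<in>S. \<forall>v\<in>S. \<not> E u v)"

definition maximal_stable_set :: "'a set \<Rightarrow> ('a \<Rightarrow> 'a \<Rightarrow> bool) \<Rightarrow> 'a set \<Rightarrow> bool" where
  "maximal_stable_set V E S \<longleftrightarrow>
     stable_set V E S \<and> (\<forall>T. stable_set V E T \<and> S \<subseteq> T \<longrightarrow> T = S)"

definition non_edge_covering :: "'a set \<Rightarrow> ('a \<Rightarrow> 'a \<Rightarrow> bool) \<Rightarrow> 'a set set \<Rightarrow> bool" where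
  "non_edge_covering V E \<S> \<longleftrightarrow>
     (\<forall>S\<in>\<S>. maximal_stable_set V E S) \<and>
     (\<forall>u\<in>V. \<forall>v\<in>V. u \<noteq> v \<and> \<not> E u v \<longrightarrow> (\<exists>S\<in>\<S>. u \<in> S \<and> v \<in> S))"

definition weakly_triangle :: "'a set \<Rightarrow> ('a \<Rightarrow> 'a \<Rightarrow> bool) \<Rightarrow> bool" where
  "weakly_triangle V E \<longleftrightarrow>
     (\<exists>\<S>. non_edge_covering V E \<S> \<and>
        (\<forall>S\<in>\<S>. \<forall>u\<in>V - S. \<forall>v\<in>V - S. E u v \<longrightarrow> (\<exists>w\<in>S. E u w \<and> E v w)))"

definition complement_graph :: "('a \<Rightarrow> 'a \<Rightarrow> bool) \<Rightarrow> 'a \<Rightarrow> 'a \<Rightarrow> bool" where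
  "complement_graph E u v \<longleftrightarrow> u \<noteq> v \<and> \<not> E u v"

definition Cir9_V :: "nat set" where
  "Cir9_V = {1..9}"

definition Cir9_blocks :: "nat set set" where
  "Cir9_blocks = {{1,2,3}, {4,5,6}, {7,8,9}, {1,4,7}, {3,6,9}}"

definition Cir9_E :: "nat \<Rightarrow> nat \<Rightarrow> bool" where
  "Cir9_E u v \<longleftrightarrow> u \<noteq> v \<and> \<not> (\<exists>B\<in>Cir9_blocks. u \<in> B \<and> v \<in> B)"

end

theory Submission
  imports Defs
begin

lemma V9: "x \<in> Cir9_V \<Longrightarrow> x=1\<or>x=2\<or>x=3\<or>x=4\<or>x=5\<or>x=6\<or>x=7\<or>x=8\<or>x=(9::nat)"
  unfolding Cir9_V_def by auto

lemma CG: "complement_graph Cir9_E u v \<longleftrightarrow> u \<noteq> v \<and> (\<exists>B\<in>Cir9_blocks. u \<in> B \<and> v \<in> B)"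
  unfolding complement_graph_def Cir9_E_def by auto

lemma CGc: "complement_graph Cir9_E u v \<longleftrightarrow> u \<noteq> v \<and>
   ({u,v} \<subseteq> {1,2,3} \<or> {u,v} \<subseteq> {4,5,6} \<or> {u,v} \<subseteq> {7,8,9} \<or> {u,v} \<subseteq> {1,4,7} \<or> {u,v} \<subseteq> {3,6,9})"
  unfolding CG Cir9_blocks_def by auto

theorem proposition43:
  shows "\<not> weakly_triangle Cir9_V (complement_graph Cir9_E)"
proof
  let ?G = "complement_graph Cir9_E"
  assume "weakly_triangle Cir9_V ?G"
  then obtain SS where cov: "non_edge_covering Cir9_V ?G SS" and
    cond: "\<forall>S\<in>SS. \<forall>u\<in>Cir9_V - S. \<forall>v\<in>Cir9_V - S. ?G u v \<longrightarrow> (\<exists>w\<in>S. ?G u w \<and> ?G v w)"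
    unfolding weakly_triangle_def by blast
  have "\<exists>S\<in>SS. 2 \<in> S \<and> 5 \<in> S"
    using cov unfolding non_edge_covering_def by (auto simp: Cir9_V_def CGc)
  then obtain S where S: "S \<in> SS" "2 \<in> S" "5 \<in> S" by blast
  have ms: "maximal_stable_set Cir9_V ?G S" using cov S unfolding non_edge_covering_def by blast
  have sub: "S \<subseteq> Cir9_V" and st: "\<And>u v. u \<in> S \<Longrightarrow> v \<in> S \<Longrightarrow> \<not> ?G u v"
    using ms unfolding maximal_stable_set_def stable_set_def by auto
  have c: "\<And>u v. u \<in> Cir9_V - S \<Longrightarrow> v \<in> Cir9_V - S \<Longrightarrow> ?G u v \<Longrightarrow> \<exists>w\<in>S. ?G u w \<and> ?G v w"
    using cond S by blast
  have mem: "\<And>x. x \<in> S \<Longrightarrow> x \<in> {2,5,7,8,9}"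
  proof -
    fix x assume x: "x \<in> S"
    have "\<not> ?G x 2" "\<not> ?G x 5" using st x S by auto
    with V9[of x] sub x show "x \<in> {2,5,7,8,9}" by (auto simp: CGc)
  qed
  have n1: "1 \<notin> S" "3 \<notin> S" "4 \<notin> S" "6 \<notin> S" using mem by fastforce+
  show False
  proof (cases "8 \<in> S")
    case True
    have "\<exists>w\<in>S. ?G 1 w \<and> ?G 4 w" using n1 by (intro c) (auto simp: Cir9_V_def CGc)
    then obtain w where w: "w \<in> S" "?G 1 w" "?G 4 w" by blast
    have "\<not> ?G w 8" using st w True by auto
    with mem[OF w(1)] w show False by (auto simp: CGc)
  next
    case n8: False
    show False
    proof (cases "7 \<in> S")
      case True
      have "\<exists>w\<in>S. ?G 3 w \<and> ?G 6 w" using n1 by (intro c) (auto simp: Cir9_V_def CGc)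
      then obtain w where w: "w \<in> S" "?G 3 w" "?G 6 w" by blast
      have "\<not> ?G w 7" using st w True by auto
      with mem[OF w(1)] w show False by (auto simp: CGc)
    next
      case n7: False
      show False
      proof (cases "9 \<in> S")
        case True
        have "\<exists>w\<in>S. ?G 1 w \<and> ?G 4 w" using n1 by (intro c) (auto simp: Cir9_V_def CGc)
        then obtain w where w: "w \<in> S" "?G 1 w" "?G 4 w" by blast
        have "\<not> ?G w 9" using st w True by auto
        with mem[OF w(1)] w show False by (auto simp: CGc)
      next
        case n9: False
        have Ssub: "S \<subseteq> {2,5}" using mem n7 n8 n9 by auto
        have "stable_set Cir9_V ?G (insert 8 S)"
          unfolding stable_set_def using sub Ssub
          by (auto simp: Cir9_V_def CGc)
        hence "insert 8 S = S" using ms unfolding maximal_stable_set_def by blast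
        with n8 show False by auto
      qed
    qed
  qed
qed

end
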